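(* Let $m,n\ge 1$ and let $k>0$ and $l$ be fixed integers. Let $P,Q$ be constant $n\times n$ complex matrices, let $\mathfrak{R}(P)$ be a finite set of distinct invertible constant $n\times n$ matrices $\Lambda$ with $-(\Lambda^{k}+\Lambda^{k-l})=P$, and let $\mathfrak{R}(Q)$ be a finite set of distinct invertible constant $n\times n$ matrices $\tilde\Lambda$ with $-(\tilde\Lambda^{k}+\tilde\Lambda^{k-l})=Q$. For each $\Lambda\in\mathfrak{R}(P)$ let $A_\Lambda$ be a constant $m\times n$ matrix, for each $\tilde\Lambda\in\mathfrak{R}(Q)$ let $B_{\tilde\Lambda}$ be a constant $n\times m$ matrix, and for each pair let $X_{\tilde\Lambda,\Lambda}$ be a constant $n\times n$ matrix satisfying the Stein equation $\tilde\Lambda^{-l}X_{\tilde\Lambda,\Lambda}\Lambda^{l}-X_{\tilde\Lambda,\Lambda}=B_{\tilde\Lambda}A_\Lambda$. Let $\tilde\omega$ be a constant $n\times n$ matrix and set $\gamma_1=\tilde\omega P-Q\tilde\omega$. Define, for $t\in\mathbb{C}$ (or $\mathbb{R}$) and $j\in\mathbb{Z}$, $$\theta=\sum_{\Lambda\in\mathfrak{R}(P)}A_\Lambda e^{\Lambda^l t}\Lambda^j,\qquad \eta=\sum_{\tilde\Lambda\in\mathfrak{R}(Q)}e^{-\tilde\Lambda^l t}\tilde\Lambda^{-j}B_{\tilde\Lambda},$$ $$\tilde\Omega=\sum_{\Lambda\in\mathfrak{R}(P),\,\tilde\Lambda\in\mathfrak{R}(Q)}e^{-\tilde\Lambda^l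 t}\tilde\Lambda^{-j}X_{\tilde\Lambda,\Lambda}e^{\Lambda^l t}\Lambda^j+\tilde\omega,$$ and assume $\tilde\Omega$ is invertible. Let $g_0$ be a constant invertible $m\times m$ matrix. Then $$g=(I-\theta\,\tilde\Omega_{(l)}^{-1}\eta)\,g_0,\qquad \hat q=\theta\,\tilde\Omega_{(l)}^{-1}\gamma_1,\qquad \tilde r=\tilde\Omega^{-1}\eta$$ solve the system $$(g\,g_{(k)}^{-1})_t+(g\,g_{(l)}^{-1})_{(k-l)}-g\,g_{(l)}^{-1}=-(\hat q\,\tilde r_{(k)})_t,\qquad \hat q_t=g\,g_{(l)}^{-1}\hat q_{(l)},\qquad \tilde r_t=-(\tilde r\,g)_{(-l)}\,g^{-1}$$ (wherever the expressions are defined, in particular where $g$ is invertible).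
   Context: All dependent variables are matrix-valued functions of a continuous variable $t$ and a discrete variable $j\in\mathbb{Z}$; subscript $t$ denotes the derivative with respect to $t$, and for an integer $s$, $f_{(s)}(t,j)=f(t,j+s)$ denotes the shifted function. $I$ denotes the identity matrix. The displayed system is a self-consistent source extension of the reduced equation $(g g_{(k)}^{-1})_t=g g_{(l)}^{-1}-(g g_{(l)}^{-1})_{(k-l)}$, which via $V=g\,g_{(1)}^{-1}$ gives the generalized Volterra lattice equations. *)

theory Defs
  imports "HOL-Analysis.Analysis"
begin

definition mpow :: "complex^'n^'n \<Rightarrow> nat \<Rightarrow> complex^'n^'n" where
  "mpow A k = (((**) A) ^^ k) (mat 1)"

definition mpowi :: "complex^'n^'n \<Rightarrow> int \<Rightarrow> complex^'n^'n" where
  "mpowi A j = (if 0 \<le> j then mpow A (nat j) else mpow (matrix_inv A) (nat (- j)))"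

definition mexp :: "complex^'n^'n \<Rightarrow> complex^'n^'n" where
  "mexp A = (\<Sum>k. (1 / fact k) *\<^sub>R mpow A k)"

end

theory Submission
  imports Defs
begin

lemma matrix_add_rdistrib: "(A + B) ** C = A ** C + B ** (C::'a::semiring_1^_^_)"
  by (vector matrix_matrix_mult_def sum.distrib[symmetric] field_simps)
lemma matrix_diff_ldistrib: "(A::'a::ring_1^_^_) ** (B - C) = A ** B - A ** C"
  by (vector matrix_matrix_mult_def sum_subtractf[symmetric] field_simps)
lemma matrix_diff_rdistrib: "((A::'a::ring_1^_^_) - B) ** C = A ** C - B ** C"
  by (vector matrix_matrix_mult_def sum_subtractf[symmetric] field_simps)
lemma matrix_neg_left: "(- (A::'a::ring_1^_^_)) ** B = - (A ** B)"
  by (vector matrix_matrix_mult_def sum_negf[symmetric])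
lemma matrix_neg_right: "(A::'a::ring_1^_^_) ** (- B) = - (A ** B)"
  by (vector matrix_matrix_mult_def sum_negf[symmetric])
lemma matrix_sum_left: "(sum f I) ** (B::'a::semiring_1^_^_) = (\<Sum>i\<in>I. f i ** B)"
  by (induct I rule: infinite_finite_induct) (auto simp: matrix_add_rdistrib)
lemma matrix_sum_right: "(B::'a::semiring_1^_^_) ** (sum f I) = (\<Sum>i\<in>I. B ** f i)"
  by (induct I rule: infinite_finite_induct) (auto simp: matrix_add_ldistrib)

lemma bb_mult: "bounded_bilinear (\<lambda>(A::complex^'n^'m) (B::complex^'p^'n). A ** B)"
proof -
  have "bilinear (\<lambda>(A::complex^'n^'m) (B::complex^'p^'n). A ** B)"
    unfolding bilinear_def
    by (auto intro!: linearI simp: matrix_add_ldistrib matrix_add_rdistrib matrix_scalar_ac scalar_matrix_assoc)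
  then show ?thesis by (simp add: bilinear_conv_bounded_bilinear)
qed

lemma bl_mult_left: "bounded_linear (\<lambda>(A::complex^'n^'m). A ** (B::complex^'p^'n))"
  using bounded_bilinear.bounded_linear_left[OF bb_mult] .
lemma bl_mult_right: "bounded_linear (\<lambda>(B::complex^'p^'n). (A::complex^'n^'m) ** B)"
  using bounded_bilinear.bounded_linear_right[OF bb_mult] .

lemma inv_eq: fixes A B :: "'a::semiring_1^'n^'n"
  assumes "A ** B = mat 1" "B ** A = mat 1" shows "matrix_inv A = B"
proof -
  have ex: "\<exists>A'. A ** A' = mat 1 \<and> A' ** A = mat 1" using assms by blast
  define C where "C = matrix_inv A"
  have C: "A ** C = mat 1" "C ** A = mat 1" using someI_ex[OF ex] unfolding C_def matrix_inv_def by auto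
  have "C = (B ** A) ** C" using assms by simp
  also have "\<dots> = B" by (metis C(1) matrix_mul_assoc matrix_mul_rid)
  finally show ?thesis unfolding C_def .
qed

lemma inv_props: fixes A :: "'a::semiring_1^'n^'n" assumes "invertible A"
  shows "A ** matrix_inv A = mat 1" "matrix_inv A ** A = mat 1"
  using assms someI_ex[of "\<lambda>A'. A ** A' = mat 1 \<and> A' ** A = mat 1"]
  unfolding invertible_def matrix_inv_def by auto

lemma mpow_0[simp]: "mpow M 0 = mat 1" by (simp add: mpow_def)
lemma mpow_Suc: "mpow M (Suc n) = M ** mpow M n" by (simp add: mpow_def)
lemma mpow_comm1: "mpow M n ** M = M ** mpow M n"
  by (induct n) (simp_all add: mpow_Suc, metis matrix_mul_assoc)
lemma mpow_Suc_right: "mpow M (Suc n) = mpow M n ** M"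
  by (simp add: mpow_Suc mpow_comm1)
lemma mpow_add: "mpow M (a + b) = mpow M a ** mpow M b"
  by (induct a) (simp_all add: mpow_Suc matrix_mul_assoc)
lemma mpow_commute: "A ** M = M ** A \<Longrightarrow> A ** mpow M n = mpow M n ** A"
  by (induct n) (simp_all add: mpow_Suc, metis matrix_mul_assoc)
lemma mpow_scaleR: "mpow (c *\<^sub>R M) n = c ^ n *\<^sub>R mpow M n"
  by (induct n) (simp_all add: mpow_Suc scalar_matrix_assoc[symmetric] matrix_scalar_ac)

lemma mpowi_nonpos: "b \<le> 0 \<Longrightarrow> mpowi L b = mpow (matrix_inv L) (nat (- b))"
  by (cases "b = 0") (auto simp: mpowi_def)

lemma mpowi_succ: assumes "invertible L" shows "mpowi L (a + 1) = mpowi L a ** L"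
proof (cases "0 \<le> a")
  case True
  then have "nat (a + 1) = Suc (nat a)" by simp
  then show ?thesis using True by (simp add: mpowi_def mpow_Suc_right)
next
  case False
  then have "nat (- a) = Suc (nat (- (a + 1)))" by simp
  then have "mpowi L a = mpow (matrix_inv L) (nat (- (a + 1))) ** matrix_inv L"
    using False by (simp add: mpowi_def mpow_Suc_right)
  then have "mpowi L a ** L = mpow (matrix_inv L) (nat (- (a + 1)))"
    using inv_props[OF assms] by (simp add: matrix_mul_assoc[symmetric])
  then show ?thesis using False by (simp add: mpowi_nonpos)
qed

lemma mpowi_pred: assumes "invertible L" shows "mpowi L (a - 1) = mpowi L a ** matrix_inv L"
proof -
  have "mpowi L a = mpowi L (a - 1) ** L" using mpowi_succ[OF assms, of "a - 1"] by simp
  then show ?thesis using inv_props[OF assms] by (simp add: matrix_mul_assoc[symmetric])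
qed

lemma mpowi_0[simp]: "mpowi L 0 = mat 1" by (simp add: mpowi_def)

lemma mpowi_add: assumes "invertible L" shows "mpowi L (a + b) = mpowi L a ** mpowi L b"
proof (induct b rule: int_induct[where k=0])
  case base then show ?case by simp
next
  case (step1 i)
  have "mpowi L (a + (i + 1)) = mpowi L (a + i) ** L" using mpowi_succ[OF assms, of "a+i"] by (simp add: add.assoc)
  also have "\<dots> = mpowi L a ** mpowi L (i + 1)" using step1 mpowi_succ[OF assms, of i] by (simp add: matrix_mul_assoc)
  finally show ?case .
next
  case (step2 i)
  have "mpowi L (a + (i - 1)) = mpowi L (a + i) ** matrix_inv L" using mpowi_pred[OF assms, of "a+i"] by (simp add: algebra_simps)
  also have "\<dots> = mpowi L a ** mpowi L (i - 1)" using step2 mpowi_pred[OF assms, of i] by (simp add: matrix_mul_assoc)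
  finally show ?case .
qed

lemma mpowi_comm: assumes "invertible L" shows "mpowi L a ** mpowi L b = mpowi L b ** mpowi L a"
  using mpowi_add[OF assms, of a b] mpowi_add[OF assms, of b a] by (simp add: add.commute)

lemma mpow_bound: fixes M :: "complex^'n^'n"
  obtains a b where "a \<ge> 0" "b \<ge> 0" "\<And>n. norm (mpow M n) \<le> a * b ^ n"
proof -
  obtain K where K: "K > 0" "\<And>x y. norm ((x::complex^'n^'n) ** (y::complex^'n^'n)) \<le> norm x * norm y * K"
    using bounded_bilinear.pos_bounded[OF bb_mult[where 'n='n and 'm='n and 'p='n]] by auto
  define c where "c = norm (mat 1 :: complex^'n^'n)"
  have "norm (mpow M n) \<le> c * (K * norm M) ^ n" for n
  proof (induct n)
    case 0 then show ?case by (simp add: c_def)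
  next
    case (Suc n)
    have "norm (mpow M (Suc n)) \<le> norm M * norm (mpow M n) * K" unfolding mpow_Suc by (rule K(2))
    also have "\<dots> \<le> norm M * (c * (K * norm M) ^ n) * K"
      by (rule mult_right_mono[OF mult_left_mono[OF Suc]]) (use K(1) in auto)
    also have "\<dots> = c * (K * norm M) ^ Suc n" by (simp add: mult_ac)
    finally show ?case .
  qed
  then show ?thesis using that[of c "K * norm M"] K(1) unfolding c_def by (meson mult_nonneg_nonneg norm_ge_zero less_imp_le)
qed

lemma ser_summable: fixes D :: "nat \<Rightarrow> 'a::banach"
  assumes b: "\<And>n. norm (D n) \<le> a * b ^ n" and "b \<ge> 0"
  shows "summable (\<lambda>n. (x ^ n / fact n) *\<^sub>R D n)"
proof (rule summable_comparison_test)
  show "summable (\<lambda>n. a * (inverse (fact n) * (\<bar>x\<bar> * b) ^ n))"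
    by (intro summable_mult summable_exp)
  show "\<exists>N. \<forall>n\<ge>N. norm ((x ^ n / fact n) *\<^sub>R D n) \<le> a * (inverse (fact n) * (\<bar>x\<bar> * b) ^ n)"
  proof (intro exI allI impI)
    fix n :: nat
    have "norm ((x ^ n / fact n) *\<^sub>R D n) = (\<bar>x\<bar> ^ n / fact n) * norm (D n)"
      by (simp add: power_abs)
    also have "\<dots> \<le> (\<bar>x\<bar> ^ n / fact n) * (a * b ^ n)"
      by (rule mult_left_mono[OF b]) simp
    also have "\<dots> = a * (inverse (fact n) * (\<bar>x\<bar> * b) ^ n)"
      by (simp add: power_mult_distrib divide_inverse mult_ac)
    finally show "norm ((x ^ n / fact n) *\<^sub>R D n) \<le> a * (inverse (fact n) * (\<bar>x\<bar> * b) ^ n)" .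
  qed
qed

lemma powser_deriv:
  fixes C :: "nat \<Rightarrow> 'a::banach"
  assumes b: "\<And>n. norm (C n) \<le> a * b ^ n" and b0: "b \<ge> 0"
  shows "((\<lambda>s. \<Sum>n. (s ^ n / fact n) *\<^sub>R C n) has_vector_derivative
          (\<Sum>n. (t ^ n / fact n) *\<^sub>R C (Suc n))) (at t)"
proof -
  define S where "S = ball t 1"
  define f where "f n x = (x ^ n / fact n) *\<^sub>R C n" for n x
  define d where "d n x = (real n * x ^ (n - 1) / fact n) *\<^sub>R C n" for n x
  define gg where "gg n x = (x ^ n / fact n) *\<^sub>R C (Suc n)" for n x
  define G where "G x = (\<Sum>n. gg n x)" for x
  have bS: "\<And>n. norm (C (Suc n)) \<le> (a * b) * b ^ n" using b by (metis power_Suc mult.assoc)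
  have der: "(f n has_derivative (\<lambda>h. h *\<^sub>R d n x)) (at x within S)" for n x
  proof -
    have "((\<lambda>x. x ^ n / fact n) has_real_derivative (real n * x ^ (n - 1) / fact n)) (at x within S)"
      by (auto intro!: derivative_eq_intros)
    then have "(f n has_vector_derivative d n x) (at x within S)"
      unfolding f_def d_def by (auto intro!: derivative_eq_intros)
    then show ?thesis by (simp add: has_vector_derivative_def)
  qed
  have shift: "(\<Sum>i<Suc n. d i x) = (\<Sum>i<n. gg i x)" for n x
  proof -
    have "(\<Sum>i<Suc n. d i x) = d 0 x + (\<Sum>i<n. d (Suc i) x)" by (rule sum.lessThan_Suc_shift)
    moreover have "d (Suc i) x = gg i x" for i
      unfolding d_def gg_def by (simp add: divide_simps)
    ultimately show ?thesis by (simp add: d_def)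
  qed
  have unif: "uniform_limit S (\<lambda>n x. \<Sum>i<n. gg i x) G sequentially"
    unfolding G_def
  proof (rule Weierstrass_m_test)
    fix n x assume "x \<in> S"
    then have xb: "\<bar>x\<bar> \<le> \<bar>t\<bar> + 1" unfolding S_def by (auto simp: dist_real_def)
    have "norm (gg n x) = (\<bar>x\<bar> ^ n / fact n) * norm (C (Suc n))" unfolding gg_def by (simp add: power_abs)
    also have "\<dots> \<le> ((\<bar>t\<bar> + 1) ^ n / fact n) * ((a * b) * b ^ n)"
    proof (rule mult_mono)
      show "\<bar>x\<bar> ^ n / fact n \<le> (\<bar>t\<bar> + 1) ^ n / fact n"
        by (rule divide_right_mono[OF power_mono[OF xb]]) auto
    qed (use bS in auto)
    finally show "norm (gg n x) \<le> (a * b) * (inverse (fact n) * ((\<bar>t\<bar> + 1) * b) ^ n)"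
      by (simp add: power_mult_distrib divide_inverse mult_ac)
  next
    show "summable (\<lambda>n. (a * b) * (inverse (fact n) * ((\<bar>t\<bar> + 1) * b) ^ n))"
      by (intro summable_mult summable_exp)
  qed
  have cond: "\<forall>\<^sub>F n in sequentially. \<forall>x\<in>S. \<forall>h. norm ((\<Sum>i<n. h *\<^sub>R d i x) - h *\<^sub>R G x) \<le> e * norm h"
    if e: "e > 0" for e
  proof -
    from uniform_limitD[OF unif e] obtain N where N: "\<And>n x. n \<ge> N \<Longrightarrow> x \<in> S \<Longrightarrow> dist (\<Sum>i<n. gg i x) (G x) < e"
      unfolding eventually_sequentially by blast
    show ?thesis unfolding eventually_sequentially
    proof (intro exI[of _ "Suc N"] allI impI ballI)
      fix n x h assume n: "Suc N \<le> n" and x: "x \<in> S"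
      then obtain m where m: "n = Suc m" "m \<ge> N" by (cases n) auto
      have "(\<Sum>i<n. h *\<^sub>R d i x) - h *\<^sub>R G x = h *\<^sub>R ((\<Sum>i<m. gg i x) - G x)"
        using shift[where n=m and x=x] m by (simp add: scaleR_sum_right[symmetric] scaleR_diff_right)
      then have "norm ((\<Sum>i<n. h *\<^sub>R d i x) - h *\<^sub>R G x) = norm h * dist (\<Sum>i<m. gg i x) (G x)"
        by (simp add: dist_norm)
      also have "\<dots> \<le> norm h * e" using N[OF m(2) x] by (intro mult_left_mono) auto
      finally show "norm ((\<Sum>i<n. h *\<^sub>R d i x) - h *\<^sub>R G x) \<le> e * norm h" by (simp add: mult_ac)
    qed
  qed
  have tS: "t \<in> S" unfolding S_def by simp
  have sm: "(\<lambda>n. f n t) sums (\<Sum>n. f n t)"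
    unfolding f_def by (rule summable_sums[OF ser_summable[OF b b0]])
  obtain g where g: "\<And>x. x \<in> S \<Longrightarrow> (\<lambda>n. f n x) sums g x \<and> (g has_derivative (\<lambda>h. h *\<^sub>R G x)) (at x within S)"
    using has_derivative_series[of S f "\<lambda>n x h. h *\<^sub>R d n x" "\<lambda>x h. h *\<^sub>R G x", OF _ der cond tS sm]
    unfolding S_def by (metis convex_ball mem_ball)
  have "(g has_vector_derivative G t) (at t)"
    using g[OF tS] at_within_open[OF tS] unfolding S_def has_vector_derivative_def by (simp add: S_def)
  then have "((\<lambda>s. \<Sum>n. f n s) has_vector_derivative G t) (at t)"
  proof (rule has_vector_derivative_transform_within_open)
    show "open S" "t \<in> S" using tS by (auto simp: S_def)
    show "\<And>y. y \<in> S \<Longrightarrow> g y = (\<Sum>n. f n y)" using g sums_unique by metis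
  qed
  then show ?thesis unfolding f_def G_def gg_def .
qed

lemma mexp_series: "mexp (t *\<^sub>R M) = (\<Sum>n. (t ^ n / fact n) *\<^sub>R mpow M n)"
  unfolding mexp_def mpow_scaleR by simp

lemma mexp_summable: "summable (\<lambda>n. (t ^ n / fact n) *\<^sub>R mpow (M::complex^'n^'n) n)"
proof -
  obtain a b where "a \<ge> 0" "b \<ge> 0" "\<And>n. norm (mpow M n) \<le> a * b ^ n" using mpow_bound[of M] by blast
  then show ?thesis by (intro ser_summable[where a=a and b=b]) auto
qed

lemma mexp_deriv: "((\<lambda>s. mexp (s *\<^sub>R (M::complex^'n^'n))) has_vector_derivative (mexp (t *\<^sub>R M) ** M)) (at t)"
proof -
  obtain a b where ab: "a \<ge> 0" "b \<ge> 0" "\<And>n. norm (mpow M n) \<le> a * b ^ n" using mpow_bound[of M] by blast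
  have "((\<lambda>s. \<Sum>n. (s ^ n / fact n) *\<^sub>R mpow M n) has_vector_derivative
          (\<Sum>n. (t ^ n / fact n) *\<^sub>R mpow M (Suc n))) (at t)"
    by (rule powser_deriv[OF ab(3) ab(2)])
  moreover have "(\<Sum>n. (t ^ n / fact n) *\<^sub>R mpow M (Suc n)) = mexp (t *\<^sub>R M) ** M"
  proof -
    have "(\<Sum>n. (t ^ n / fact n) *\<^sub>R mpow M (Suc n)) = (\<Sum>n. ((t ^ n / fact n) *\<^sub>R mpow M n) ** M)"
      by (simp add: mpow_Suc_right scalar_matrix_assoc)
    also have "\<dots> = (\<Sum>n. (t ^ n / fact n) *\<^sub>R mpow M n) ** M"
      by (rule bounded_linear.suminf[OF bl_mult_left mexp_summable, symmetric])
    finally show ?thesis by (simp add: mexp_series)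
  qed
  ultimately show ?thesis by (simp add: mexp_series)
qed

lemma mexp_comm: assumes "A ** M = M ** (A::complex^'n^'n)"
  shows "A ** mexp (t *\<^sub>R M) = mexp (t *\<^sub>R M) ** A"
proof -
  have "A ** mexp (t *\<^sub>R M) = (\<Sum>n. A ** ((t ^ n / fact n) *\<^sub>R mpow M n))"
    unfolding mexp_series by (rule bounded_linear.suminf[OF bl_mult_right mexp_summable])
  also have "\<dots> = (\<Sum>n. ((t ^ n / fact n) *\<^sub>R mpow M n) ** A)"
    by (simp add: matrix_scalar_ac scalar_matrix_assoc[symmetric] mpow_commute[OF assms])
  also have "\<dots> = mexp (t *\<^sub>R M) ** A"
    unfolding mexp_series by (rule bounded_linear.suminf[OF bl_mult_left mexp_summable, symmetric])
  finally show ?thesis .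
qed

lemma vderiv_iff: fixes f :: "real \<Rightarrow> 'a::real_normed_vector"
  shows "(f has_vector_derivative D) (at x) \<longleftrightarrow> ((\<lambda>y. (f y - f x) /\<^sub>R (y - x)) \<longlongrightarrow> D) (at x)"
proof -
  have eq: "\<forall>\<^sub>F y in at x. norm (((f y - f x) - (y - x) *\<^sub>R D) /\<^sub>R norm (y - x)) = norm ((f y - f x) /\<^sub>R (y - x) - D)"
    unfolding eventually_at_filter
  proof (intro always_eventually allI impI)
    fix y assume "y \<noteq> x"
    then have "(f y - f x) /\<^sub>R (y - x) - D = ((f y - f x) - (y - x) *\<^sub>R D) /\<^sub>R (y - x)"
      by (simp add: scaleR_diff_right)
    then show "norm (((f y - f x) - (y - x) *\<^sub>R D) /\<^sub>R norm (y - x)) = norm ((f y - f x) /\<^sub>R (y - x) - D)"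
      by simp
  qed
  have "(f has_vector_derivative D) (at x) \<longleftrightarrow> ((\<lambda>y. ((f y - f x) - (y - x) *\<^sub>R D) /\<^sub>R norm (y - x)) \<longlongrightarrow> 0) (at x)"
    unfolding has_vector_derivative_def using has_derivative_at_within[of f "\<lambda>h. h *\<^sub>R D" x UNIV]
    by (simp add: bounded_linear_scaleR_left)
  also have "\<dots> \<longleftrightarrow> ((\<lambda>y. norm (((f y - f x) - (y - x) *\<^sub>R D) /\<^sub>R norm (y - x))) \<longlongrightarrow> 0) (at x)"
    by (rule tendsto_norm_zero_iff[symmetric])
  also have "\<dots> \<longleftrightarrow> ((\<lambda>y. norm ((f y - f x) /\<^sub>R (y - x) - D)) \<longlongrightarrow> 0) (at x)"
    by (rule tendsto_cong[OF eq])
  also have "\<dots> \<longleftrightarrow> ((\<lambda>y. (f y - f x) /\<^sub>R (y - x) - D) \<longlongrightarrow> 0) (at x)"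
    by (rule tendsto_norm_zero_iff)
  also have "\<dots> \<longleftrightarrow> ((\<lambda>y. (f y - f x) /\<^sub>R (y - x)) \<longlongrightarrow> D) (at x)"
    by (rule LIM_zero_iff)
  finally show ?thesis .
qed

lemma norm3: obtains K where "K > 0" "\<And>(A::complex^'n^'m) (B::complex^'p^'n) (C::complex^'q^'p). norm (A ** B ** C) \<le> norm A * norm B * norm C * K"
proof -
  obtain K1 where K1: "K1 > 0" "\<And>(x::complex^'n^'m) (y::complex^'p^'n). norm (x ** y) \<le> norm x * norm y * K1"
    using bounded_bilinear.pos_bounded[OF bb_mult[where 'n='n and 'm='m and 'p='p]] by auto
  obtain K2 where K2: "K2 > 0" "\<And>(x::complex^'p^'m) (y::complex^'q^'p). norm (x ** y) \<le> norm x * norm y * K2"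
    using bounded_bilinear.pos_bounded[OF bb_mult[where 'n='p and 'm='m and 'p='q]] by auto
  have "norm (A ** B ** C) \<le> norm A * norm B * norm C * (K1 * K2)" for A :: "complex^'n^'m" and B :: "complex^'p^'n" and C :: "complex^'q^'p"
  proof -
    have "norm (A ** B ** C) \<le> norm (A ** B) * norm C * K2" by (rule K2(2))
    also have "\<dots> \<le> (norm A * norm B * K1) * norm C * K2"
      using K1(2)[of A B] K2(1) by (intro mult_right_mono) auto
    finally show ?thesis by (simp add: mult_ac)
  qed
  then show ?thesis using that[of "K1 * K2"] K1 K2 by auto
qed

lemma inv_cont: fixes S :: "real \<Rightarrow> complex^'n^'n"
  assumes inv: "\<And>s. invertible (S s)" and cont: "(S \<longlongrightarrow> S t) (at t)"
  shows "((\<lambda>s. matrix_inv (S s)) \<longlongrightarrow> matrix_inv (S t)) (at t)"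
proof -
  define R where "R s = matrix_inv (S s)" for s
  define r0 where "r0 = norm (R t)"
  obtain K where K: "K > 0" "\<And>(A::complex^'n^'n) (B::complex^'n^'n) (C::complex^'n^'n). norm (A ** B ** C) \<le> norm A * norm B * norm C * K"
    using norm3[where 'n='n and 'm='n and 'p='n and 'q='n] by metis
  define \<delta> where "\<delta> s = norm (S s - S t)" for s
  have d0: "(\<delta> \<longlongrightarrow> 0) (at t)" unfolding \<delta>_def using cont
    by (simp add: LIM_zero tendsto_norm_zero)
  have id: "R s - R t = R s ** (S t - S s) ** R t" for s
  proof -
    have "R s ** (S t - S s) ** R t = R s ** S t ** R t - R s ** S s ** R t"
      by (simp add: matrix_diff_ldistrib matrix_diff_rdistrib)
    also have "\<dots> = R s - R t"
      using inv_props[OF inv[of s]] inv_props[OF inv[of t]] unfolding R_def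
      by (simp add: matrix_mul_assoc[symmetric])
    finally show ?thesis by simp
  qed
  have bnd: "norm (R s - R t) \<le> norm (R s) * \<delta> s * r0 * K" for s
    using K(2)[of "R s" "S t - S s" "R t"] unfolding id \<delta>_def r0_def by (simp add: norm_minus_commute)
  have "((\<lambda>s. \<delta> s * (r0 * K)) \<longlongrightarrow> 0 * (r0 * K)) (at t)" by (intro tendsto_mult d0 tendsto_const)
  then have "\<forall>\<^sub>F s in at t. \<delta> s * (r0 * K) < 1/2" by (rule order_tendstoD) simp
  then have ev: "\<forall>\<^sub>F s in at t. norm (R s - R t) \<le> 2 * r0 * r0 * K * \<delta> s"
  proof eventually_elim
    case (elim s)
    have "norm (R s) \<le> norm (R s - R t) + r0" unfolding r0_def by (metis norm_triangle_sub add.commute)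
    also have "\<dots> \<le> norm (R s) * (\<delta> s * (r0 * K)) + r0" using bnd[of s] by (simp add: mult_ac)
    also have "\<dots> \<le> norm (R s) * (1/2) + r0" using elim by (intro add_right_mono mult_left_mono) auto
    finally have nR: "norm (R s) \<le> 2 * r0" by simp
    have "norm (R s - R t) \<le> norm (R s) * \<delta> s * r0 * K" by (rule bnd)
    also have "\<dots> \<le> (2 * r0) * \<delta> s * r0 * K"
      using nR K(1) by (intro mult_right_mono) (auto simp: \<delta>_def r0_def)
    finally show ?case by (simp add: mult_ac)
  qed
  have "((\<lambda>s. 2 * r0 * r0 * K * \<delta> s) \<longlongrightarrow> 2 * r0 * r0 * K * 0) (at t)" by (intro tendsto_mult d0 tendsto_const)
  then have "((\<lambda>s. R s - R t) \<longlongrightarrow> 0) (at t)" using ev by (intro Lim_null_comparison[OF ev]) simp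
  then show ?thesis unfolding R_def by (simp add: LIM_zero_iff)
qed

lemma inv_deriv: fixes S :: "real \<Rightarrow> complex^'n^'n"
  assumes inv: "\<And>s. invertible (S s)" and d: "(S has_vector_derivative S') (at t)"
  shows "((\<lambda>s. matrix_inv (S s)) has_vector_derivative (- (matrix_inv (S t) ** S' ** matrix_inv (S t)))) (at t)"
proof -
  define R where "R s = matrix_inv (S s)" for s
  have cont: "(S \<longlongrightarrow> S t) (at t)"
    using has_vector_derivative_continuous[OF d] by (simp add: continuous_at)
  have Rt: "(R \<longlongrightarrow> R t) (at t)" unfolding R_def by (rule inv_cont[OF inv cont])
  have Q: "((\<lambda>y. (S y - S t) /\<^sub>R (y - t)) \<longlongrightarrow> S') (at t)" using d by (simp add: vderiv_iff)
  have id: "(R y - R t) /\<^sub>R (y - t) = - (R y ** ((S y - S t) /\<^sub>R (y - t)) ** R t)" for y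
  proof -
    have "R y - R t = R y ** (S t - S y) ** R t"
    proof -
      have "R y ** (S t - S y) ** R t = R y ** S t ** R t - R y ** S y ** R t"
        by (simp add: matrix_diff_ldistrib matrix_diff_rdistrib)
      also have "\<dots> = R y - R t"
        using inv_props[OF inv[of y]] inv_props[OF inv[of t]] unfolding R_def
        by (simp add: matrix_mul_assoc[symmetric])
      finally show ?thesis by simp
    qed
    also have "\<dots> = - (R y ** (S y - S t) ** R t)"
      by (metis minus_diff_eq matrix_neg_left matrix_neg_right)
    finally show ?thesis
      by (simp add: matrix_scalar_ac scalar_matrix_assoc matrix_neg_left matrix_neg_right)
  qed
  have "((\<lambda>y. - (R y ** ((S y - S t) /\<^sub>R (y - t)) ** R t)) \<longlongrightarrow> - (R t ** S' ** R t)) (at t)"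
    by (intro tendsto_minus bounded_bilinear.tendsto[OF bb_mult] Rt Q tendsto_const)
  then have "((\<lambda>y. (R y - R t) /\<^sub>R (y - t)) \<longlongrightarrow> - (R t ** S' ** R t)) (at t)"
    unfolding id .
  then show ?thesis unfolding vderiv_iff R_def .
qed

lemmas mdist = matrix_add_ldistrib matrix_add_rdistrib matrix_diff_ldistrib matrix_diff_rdistrib
  matrix_neg_left matrix_neg_right matrix_mul_assoc

lemma key_inv:
  fixes S S' :: "complex^'n^'n" and et :: "complex^'m^'n" and th :: "complex^'n^'m"
  assumes "invertible S" "invertible S'" "S' = S + et ** th"
  shows "matrix_inv S' ** et ** th ** matrix_inv S = matrix_inv S - matrix_inv S'"
proof -
  have "matrix_inv S' ** et ** th ** matrix_inv S = matrix_inv S' ** (S' - S) ** matrix_inv S"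
    using assms(3) by (simp add: matrix_mul_assoc)
  also have "\<dots> = matrix_inv S' ** S' ** matrix_inv S - matrix_inv S' ** (S ** matrix_inv S)"
    by (simp add: mdist)
  also have "\<dots> = matrix_inv S - matrix_inv S'"
    using inv_props[OF assms(1)] inv_props[OF assms(2)] by simp
  finally show ?thesis .
qed

lemma key_inv':
  fixes S S' :: "complex^'n^'n" and et :: "complex^'m^'n" and th :: "complex^'n^'m" and X :: "complex^'n^'p"
  assumes "invertible S" "invertible S'" "S' = S + et ** th"
  shows "X ** matrix_inv S' ** et ** th ** matrix_inv S = X ** matrix_inv S - X ** matrix_inv S'"
  using key_inv[OF assms] by (metis matrix_mul_assoc matrix_diff_ldistrib)

lemma GGI:
  fixes S S' :: "complex^'n^'n" and et :: "complex^'m^'n" and th :: "complex^'n^'m"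
  assumes "invertible S" "invertible S'" "S' = S + et ** th"
  shows "(mat 1 - th ** matrix_inv S' ** et) ** (mat 1 + th ** matrix_inv S ** et) = mat 1"
    and "(mat 1 + th ** matrix_inv S ** et) ** (mat 1 - th ** matrix_inv S' ** et) = mat 1"
proof -
  have k: "th ** matrix_inv S' ** et ** th ** matrix_inv S = th ** matrix_inv S - th ** matrix_inv S'"
    by (rule key_inv'[OF assms])
  have k2: "th ** matrix_inv S ** et ** th ** matrix_inv S' = th ** matrix_inv S - th ** matrix_inv S'"
  proof -
    have "matrix_inv S ** et ** th ** matrix_inv S' = matrix_inv S - matrix_inv S'"
    proof -
      have "matrix_inv S ** et ** th ** matrix_inv S' = matrix_inv S ** (S' - S) ** matrix_inv S'"
        using assms(3) by (simp add: matrix_mul_assoc)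
      also have "\<dots> = matrix_inv S ** (S' ** matrix_inv S') - matrix_inv S ** S ** matrix_inv S'"
        by (simp add: mdist)
      also have "\<dots> = matrix_inv S - matrix_inv S'"
        using inv_props[OF assms(1)] inv_props[OF assms(2)] by simp
      finally show ?thesis .
    qed
    then show ?thesis by (metis matrix_mul_assoc matrix_diff_ldistrib)
  qed
  show "(mat 1 - th ** matrix_inv S' ** et) ** (mat 1 + th ** matrix_inv S ** et) = mat 1"
    by (simp add: mdist k)
  show "(mat 1 + th ** matrix_inv S ** et) ** (mat 1 - th ** matrix_inv S' ** et) = mat 1"
    by (simp add: mdist k2)
qed

lemma key_inv2':
  fixes S S' :: "complex^'n^'n" and et :: "complex^'m^'n" and th :: "complex^'n^'m" and X :: "complex^'n^'p"
  assumes "invertible S" "invertible S'" "S' = S + et ** th"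
  shows "X ** matrix_inv S ** et ** th ** matrix_inv S' = X ** matrix_inv S - X ** matrix_inv S'"
proof -
  have "matrix_inv S ** et ** th ** matrix_inv S' = matrix_inv S - matrix_inv S'"
  proof -
    have "matrix_inv S ** et ** th ** matrix_inv S' = matrix_inv S ** (S' - S) ** matrix_inv S'"
      using assms(3) by (simp add: matrix_mul_assoc)
    also have "\<dots> = matrix_inv S ** (S' ** matrix_inv S') - matrix_inv S ** S ** matrix_inv S'"
      by (simp add: mdist)
    also have "\<dots> = matrix_inv S - matrix_inv S'"
      using inv_props[OF assms(1)] inv_props[OF assms(2)] by simp
    finally show ?thesis .
  qed
  then show ?thesis by (metis matrix_mul_assoc matrix_diff_ldistrib)
qed

lemma cancel_r: fixes A :: "complex^'n^'n" assumes "invertible A"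
  shows "X ** A ** matrix_inv A = X" "X ** matrix_inv A ** A = X"
  using inv_props[OF assms] by (simp_all add: matrix_mul_assoc[symmetric])

locale abs_sys =
  fixes l k :: int and P Q \<gamma>1 :: "complex^'n^'n" and g0 :: "complex^'m^'m"
    and th :: "real \<Rightarrow> int \<Rightarrow> complex^'n^'m" and et :: "real \<Rightarrow> int \<Rightarrow> complex^'m^'n"
    and Om :: "real \<Rightarrow> int \<Rightarrow> complex^'n^'n"
  assumes Om_inv: "\<And>t a. invertible (Om t a)"
    and g0_inv: "invertible g0"
    and shift: "\<And>t a. Om t (a + l) = Om t a + et t a ** th t a"
    and dth: "\<And>t a. ((\<lambda>s. th s a) has_vector_derivative th t (a + l)) (at t)"
    and det: "\<And>t a. ((\<lambda>s. et s a) has_vector_derivative - et t (a - l)) (at t)"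
    and dOm: "\<And>t a. ((\<lambda>s. Om s a) has_vector_derivative et t (a - l) ** th t a) (at t)"
    and thP: "\<And>t a. th t a ** P = - (th t (a + k) + th t (a + k - l))"
    and Qet: "\<And>t a. Q ** et t a = - (et t (a - k) + et t (a - k + l))"
    and gam: "\<And>t a. \<gamma>1 = Om t (a + l) ** P - Q ** Om t (a + k) + et t a ** th t (a + k)"
begin

definition G where "G t a = mat 1 - th t a ** matrix_inv (Om t (a + l)) ** et t a"
definition GI where "GI t a = mat 1 + th t a ** matrix_inv (Om t a) ** et t a"

lemma shift': "Om t a = Om t (a - l) + et t (a - l) ** th t (a - l)"
  using shift[of t "a - l"] by simp

lemmas canc = cancel_r[OF Om_inv] cancel_r[OF g0_inv] inv_props[OF Om_inv] inv_props[OF g0_inv]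

lemma G_GI: "G t a ** GI t a = mat 1" "GI t a ** G t a = mat 1"
  unfolding G_def GI_def using GGI[OF Om_inv Om_inv shift] by auto

lemma G_GI': "X ** G t a ** GI t a = X" "X ** GI t a ** G t a = X"
  using G_GI[of t a] by (simp_all add: matrix_mul_assoc[symmetric])

lemma ginv: "matrix_inv (G t a ** g0) = matrix_inv g0 ** GI t a"
proof (rule inv_eq)
  show "G t a ** g0 ** (matrix_inv g0 ** GI t a) = mat 1"
    using G_GI by (simp add: matrix_mul_assoc canc)
  show "matrix_inv g0 ** GI t a ** (G t a ** g0) = mat 1"
    by (simp add: matrix_mul_assoc canc G_GI')
qed

lemma gquot: "(G t a ** g0) ** matrix_inv (G t b ** g0) = G t a ** GI t b"
  unfolding ginv by (simp add: matrix_mul_assoc canc)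

lemma A1: "X ** GI t b ** th t b ** matrix_inv (Om t (b + l)) = X ** th t b ** matrix_inv (Om t b)"
  unfolding GI_def using key_inv2'[OF Om_inv Om_inv shift, of "X ** th t b" t b]
  by (simp add: mdist)

lemma A2: "X ** matrix_inv (Om t (a - l)) ** et t (a - l) ** G t (a - l) = X ** matrix_inv (Om t a) ** et t (a - l)"
  unfolding G_def using key_inv2'[OF Om_inv Om_inv shift'[of t a], where X=X]
  by (simp add: mdist)


lemma A2': "matrix_inv (Om t (a - l)) ** et t (a - l) ** G t (a - l) = matrix_inv (Om t a) ** et t (a - l)"
  using A2[where X="mat 1"] by simp

lemma vd_eq: "(f has_vector_derivative D) F \<Longrightarrow> D = D' \<Longrightarrow> (f has_vector_derivative D') F"
  by simp

lemma dSi: "((\<lambda>s. matrix_inv (Om s a)) has_vector_derivative - (matrix_inv (Om t a) ** (et t (a - l) ** th t a) ** matrix_inv (Om t a))) (at t)"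
  by (rule inv_deriv[OF Om_inv dOm])

lemma dq: "((\<lambda>s. th s a ** matrix_inv (Om s (a + l)) ** \<gamma>1) has_vector_derivative
   ((G t a ** g0) ** matrix_inv (G t (a + l) ** g0) ** (th t (a + l) ** matrix_inv (Om t (a + l + l)) ** \<gamma>1))) (at t)"
proof -
  note h1 = bounded_bilinear.has_vector_derivative[OF bb_mult dth[where t=t and a=a] dSi[where t=t and a="a+l"]]
  note h2 = bounded_linear.has_vector_derivative[OF bl_mult_left[where B=\<gamma>1] h1]
  show ?thesis
  proof (rule vd_eq[OF h2])
    have "(G t a ** g0) ** matrix_inv (G t (a + l) ** g0) ** (th t (a + l) ** matrix_inv (Om t (a + l + l)) ** \<gamma>1)
       = G t a ** th t (a + l) ** matrix_inv (Om t (a + l)) ** \<gamma>1"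
      unfolding gquot by (simp only: matrix_mul_assoc A1)
    then show "(th t a ** - (matrix_inv (Om t (a + l)) ** (et t (a + l - l) ** th t (a + l)) ** matrix_inv (Om t (a + l))) +
          th t (a + l) ** matrix_inv (Om t (a + l))) ** \<gamma>1 =
       (G t a ** g0) ** matrix_inv (G t (a + l) ** g0) ** (th t (a + l) ** matrix_inv (Om t (a + l + l)) ** \<gamma>1)"
      by (simp add: G_def mdist)
  qed
qed

lemma dr: "((\<lambda>s. matrix_inv (Om s a) ** et s a) has_vector_derivative
   - (matrix_inv (Om t (a - l)) ** et t (a - l) ** (G t (a - l) ** g0)) ** matrix_inv (G t a ** g0)) (at t)"
proof -
  note h1 = bounded_bilinear.has_vector_derivative[OF bb_mult dSi[where t=t and a=a] det[where t=t and a=a]]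
  show ?thesis
  proof (rule vd_eq[OF h1])
    have "- (matrix_inv (Om t (a - l)) ** et t (a - l) ** (G t (a - l) ** g0)) ** matrix_inv (G t a ** g0)
        = - (matrix_inv (Om t a) ** et t (a - l) ** GI t a)"
      unfolding ginv by (simp add: matrix_mul_assoc A2' canc matrix_neg_left)
    then show "matrix_inv (Om t a) ** - et t (a - l) + - (matrix_inv (Om t a) ** (et t (a - l) ** th t a) ** matrix_inv (Om t a)) ** et t a =
      - (matrix_inv (Om t (a - l)) ** et t (a - l) ** (G t (a - l) ** g0)) ** matrix_inv (G t a ** g0)"
      by (simp add: GI_def mdist)
  qed
qed


lemma dF: "((\<lambda>s. th s b ** matrix_inv (Om s (b + l)) ** et s (b + l)) has_vector_derivative (G t b ** GI t (b + l) - mat 1)) (at t)"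
proof -
  note h1 = bounded_bilinear.has_vector_derivative[OF bb_mult dth[where t=t and a=b] dSi[where t=t and a="b+l"]]
  note h2 = bounded_bilinear.has_vector_derivative[OF bb_mult h1 det[where t=t and a="b+l"]]
  show ?thesis
    by (rule vd_eq[OF h2]) (simp add: G_def GI_def mdist)
qed

lemma Qet': "X ** Q ** et t b = - (X ** et t (b - k) + X ** et t (b - k + l))"
  by (simp add: matrix_mul_assoc[symmetric] Qet mdist)

lemma thP': "X ** th t a ** P = - (X ** th t (a + k) + X ** th t (a + k - l))"
  by (simp add: matrix_mul_assoc[symmetric] thP mdist)

lemma E1: "(G s a ** g0) ** matrix_inv (G s (a + k) ** g0) =
   (mat 1 + th s a ** matrix_inv (Om s (a + l)) ** et s (a + l) - th s (a + k - l) ** matrix_inv (Om s (a + k)) ** et s (a + k))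
   - (th s a ** matrix_inv (Om s (a + l)) ** \<gamma>1) ** (matrix_inv (Om s (a + k)) ** et s (a + k))"
  unfolding gquot unfolding G_def GI_def gam[of s a]
  by (simp add: mdist canc thP thP' Qet')


lemma eq1: "\<exists>D1 D2. ((\<lambda>s. (G s a ** g0) ** matrix_inv (G s (a + k) ** g0)) has_vector_derivative D1) (at t) \<and>
   ((\<lambda>s. (th s a ** matrix_inv (Om s (a + l)) ** \<gamma>1) ** (matrix_inv (Om s (a + k)) ** et s (a + k))) has_vector_derivative D2) (at t) \<and>
   D1 + (G t (a + k - l) ** g0) ** matrix_inv (G t (a + k) ** g0) - (G t a ** g0) ** matrix_inv (G t (a + l) ** g0) = - D2"
proof -
  note hq = bounded_bilinear.has_vector_derivative[OF bb_mult dq[where t=t and a=a] dr[where t=t and a="a+k"]]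
  obtain D2 where hD2: "((\<lambda>s. (th s a ** matrix_inv (Om s (a + l)) ** \<gamma>1) ** (matrix_inv (Om s (a + k)) ** et s (a + k))) has_vector_derivative D2) (at t)"
    using hq by blast
  have dF2: "((\<lambda>s. th s (a + k - l) ** matrix_inv (Om s (a + k)) ** et s (a + k)) has_vector_derivative
       (G t (a + k - l) ** GI t (a + k) - mat 1)) (at t)"
    using dF[where t=t and b="a + k - l"] by simp
  define DV where "DV = (G t a ** GI t (a + l) - mat 1) - (G t (a + k - l) ** GI t (a + k) - mat 1)"
  have hV: "((\<lambda>s. (mat 1 + th s a ** matrix_inv (Om s (a + l)) ** et s (a + l) - th s (a + k - l) ** matrix_inv (Om s (a + k)) ** et s (a + k))) has_vector_derivative DV) (at t)"
    unfolding DV_def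
    using has_vector_derivative_diff[OF has_vector_derivative_add[OF has_vector_derivative_const dF[where t=t and b=a]] dF2]
    by simp
  have hU: "((\<lambda>s. (G s a ** g0) ** matrix_inv (G s (a + k) ** g0)) has_vector_derivative DV - D2) (at t)"
    unfolding E1 by (rule has_vector_derivative_diff[OF hV hD2])
  show ?thesis
  proof (intro exI conjI)
    show "((\<lambda>s. (G s a ** g0) ** matrix_inv (G s (a + k) ** g0)) has_vector_derivative DV - D2) (at t)" by (rule hU)
    show "((\<lambda>s. (th s a ** matrix_inv (Om s (a + l)) ** \<gamma>1) ** (matrix_inv (Om s (a + k)) ** et s (a + k))) has_vector_derivative D2) (at t)" by (rule hD2)
    have "(G t (a + k - l) ** g0) ** matrix_inv (G t (a + k) ** g0) = G t (a + k - l) ** GI t (a + k)" by (rule gquot)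
    moreover have "(G t a ** g0) ** matrix_inv (G t (a + l) ** g0) = G t a ** GI t (a + l)" by (rule gquot)
    ultimately show "DV - D2 + (G t (a + k - l) ** g0) ** matrix_inv (G t (a + k) ** g0) - (G t a ** g0) ** matrix_inv (G t (a + l) ** g0) = - D2"
      unfolding DV_def by simp
  qed
qed

end

lemma vd_eq': "(f has_vector_derivative D) F \<Longrightarrow> D = D' \<Longrightarrow> (f has_vector_derivative D') F"
  by simp

lemmas rassoc = matrix_mul_assoc[symmetric]

definition TT where "TT l L2 L1 X t c b = mexp ((- t) *\<^sub>R mpowi L2 l) ** mpowi L2 (- c) ** X ** mexp (t *\<^sub>R mpowi L1 l) ** mpowi L1 b"
definition UU where "UU l L2 B t c = mexp ((- t) *\<^sub>R mpowi L2 l) ** mpowi L2 (- c) ** B"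
definition VV where "VV l A L1 t b = A ** mexp (t *\<^sub>R mpowi L1 l) ** mpowi L1 b"

lemma mexp_deriv_neg: "((\<lambda>s. mexp ((- s) *\<^sub>R (M::complex^'n^'n))) has_vector_derivative - (mexp ((- t) *\<^sub>R M) ** M)) (at t)"
  using mexp_deriv[of "- M" t] by (simp add: matrix_neg_right)

lemma pw_eq: assumes "invertible L" "c = a + b" shows "mpowi L c = mpowi L a ** mpowi L b"
  using mpowi_add[OF assms(1)] assms(2) by simp

lemma pw_eqZ: assumes "invertible L" "c = a + b" shows "mpowi L a ** (mpowi L b ** Z) = mpowi L c ** Z"
  using pw_eq[OF assms] by (simp add: matrix_mul_assoc)

lemma VV_deriv: fixes A :: "complex^'n^'m" assumes L: "invertible L1"
  shows "((\<lambda>s. VV l A L1 s b) has_vector_derivative VV l A L1 t (b + l)) (at t)"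
proof -
  note h = bounded_linear.has_vector_derivative[OF bl_mult_left[where B="mpowi L1 b"]
      bounded_linear.has_vector_derivative[OF bl_mult_right[where A=A] mexp_deriv[of "mpowi L1 l" t]]]
  have e: "mpowi L1 l ** (mpowi L1 b ** Z) = mpowi L1 (b + l) ** Z" for Z :: "complex^'n^'n"
    by (rule pw_eqZ[OF L]) simp
  have e0: "mpowi L1 l ** mpowi L1 b = mpowi L1 (b + l)"
    by (rule pw_eq[OF L, symmetric]) simp
  show ?thesis unfolding VV_def
    by (rule vd_eq'[OF h]) (simp only: rassoc e e0)
qed


lemmas rdist = matrix_add_ldistrib matrix_add_rdistrib matrix_diff_ldistrib matrix_diff_rdistrib
  matrix_neg_left matrix_neg_right

lemma UU_deriv: fixes B :: "complex^'m^'n" assumes L: "invertible L2"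
  shows "((\<lambda>s. UU l L2 B s c) has_vector_derivative - UU l L2 B t (c - l)) (at t)"
proof -
  note h = bounded_linear.has_vector_derivative[OF bl_mult_left[where B=B]
     bounded_linear.has_vector_derivative[OF bl_mult_left[where B="mpowi L2 (- c)"] mexp_deriv_neg[of "mpowi L2 l" t]]]
  have e: "mpowi L2 l ** (mpowi L2 (- c) ** Z) = mpowi L2 (- (c - l)) ** Z" for Z :: "complex^'m^'n"
    by (rule pw_eqZ[OF L]) simp
  show ?thesis unfolding UU_def
    by (rule vd_eq'[OF h]) (simp only: rassoc rdist e)
qed

lemma TT_deriv: fixes X :: "complex^'n^'n" assumes L1: "invertible L1" and L2: "invertible L2"
  shows "((\<lambda>s. TT l L2 L1 X s c b) has_vector_derivative TT l L2 L1 X t c (b + l) - TT l L2 L1 X t (c - l) b) (at t)"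
proof -
  note f = bounded_linear.has_vector_derivative[OF bl_mult_left[where B=X]
     bounded_linear.has_vector_derivative[OF bl_mult_left[where B="mpowi L2 (- c)"] mexp_deriv_neg[of "mpowi L2 l" t]]]
  note h0 = bounded_bilinear.has_vector_derivative[OF bb_mult f mexp_deriv[of "mpowi L1 l" t]]
  note h = bounded_linear.has_vector_derivative[OF bl_mult_left[where B="mpowi L1 b"] h0]
  have e: "mpowi L2 l ** (mpowi L2 (- c) ** Z) = mpowi L2 (- (c - l)) ** Z" for Z :: "complex^'n^'n"
    by (rule pw_eqZ[OF L2]) simp
  have e0: "mpowi L1 l ** mpowi L1 b = mpowi L1 (b + l)"
    by (rule pw_eq[OF L1, symmetric]) simp
  show ?thesis unfolding TT_def
    by (rule vd_eq'[OF h]) (simp only: rassoc rdist e e0 diff_conv_add_uminus add.commute)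
qed

lemma TT_shift: fixes X :: "complex^'n^'n" and A :: "complex^'n^'m" and B :: "complex^'m^'n"
  assumes L1: "invertible L1" and L2: "invertible L2"
    and st: "mpowi L2 (- l) ** X ** mpowi L1 l - X = B ** A"
  shows "TT l L2 L1 X t (c + l) (b + l) = TT l L2 L1 X t c b + UU l L2 B t c ** VV l A L1 t b"
proof -
  have st': "mpowi L2 (- l) ** X ** mpowi L1 l = X + B ** A" using st by (simp add: algebra_simps)
  have stZ: "mpowi L2 (- l) ** (X ** (mpowi L1 l ** Z)) = X ** Z + B ** (A ** Z)" for Z :: "complex^'n^'n"
  proof -
    have "mpowi L2 (- l) ** (X ** (mpowi L1 l ** Z)) = (mpowi L2 (- l) ** X ** mpowi L1 l) ** Z"
      by (simp only: matrix_mul_assoc)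
    then show ?thesis unfolding st' by (simp only: rdist rassoc)
  qed
  have comm: "mexp (t *\<^sub>R mpowi L1 l) ** (mpowi L1 l ** Z) = mpowi L1 l ** (mexp (t *\<^sub>R mpowi L1 l) ** Z)" for Z :: "complex^'n^'n"
    using mexp_comm[of "mpowi L1 l" "mpowi L1 l" t] by (simp add: matrix_mul_assoc)
  have e2: "mpowi L2 (- (c + l)) = mpowi L2 (- c) ** mpowi L2 (- l)"
    by (rule pw_eq[OF L2]) simp
  have e1: "mpowi L1 (b + l) = mpowi L1 l ** mpowi L1 b"
    by (rule pw_eq[OF L1]) simp
  show ?thesis unfolding TT_def UU_def VV_def
    by (simp only: e1 e2 rassoc comm stZ rdist)
qed

lemma TT_P: assumes L1: "invertible L1" and r: "- (mpowi L1 k + mpowi L1 (k - l)) = P"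
  shows "TT l L2 L1 X t c b ** P = - (TT l L2 L1 X t c (b + k) + TT l L2 L1 X t c (b + k - l))"
proof -
  have e: "mpowi L1 b ** P = - (mpowi L1 (b + k) + mpowi L1 (b + k - l))"
  proof -
    have p1: "mpowi L1 b ** mpowi L1 k = mpowi L1 (b + k)" by (rule pw_eq[OF L1, symmetric]) simp
    have p2: "mpowi L1 b ** mpowi L1 (k - l) = mpowi L1 (b + k - l)" by (rule pw_eq[OF L1, symmetric]) simp
    show ?thesis unfolding r[symmetric] rdist p1 p2 by simp
  qed
  show ?thesis unfolding TT_def by (simp only: rassoc e rdist)
qed

lemma VV_P: assumes L1: "invertible L1" and r: "- (mpowi L1 k + mpowi L1 (k - l)) = P"
  shows "VV l A L1 t b ** P = - (VV l A L1 t (b + k) + VV l A L1 t (b + k - l))"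
proof -
  have e: "mpowi L1 b ** P = - (mpowi L1 (b + k) + mpowi L1 (b + k - l))"
  proof -
    have p1: "mpowi L1 b ** mpowi L1 k = mpowi L1 (b + k)" by (rule pw_eq[OF L1, symmetric]) simp
    have p2: "mpowi L1 b ** mpowi L1 (k - l) = mpowi L1 (b + k - l)" by (rule pw_eq[OF L1, symmetric]) simp
    show ?thesis unfolding r[symmetric] rdist p1 p2 by simp
  qed
  show ?thesis unfolding VV_def by (simp only: rassoc e rdist)
qed

lemma Q_rules: assumes L2: "invertible L2" and r: "- (mpowi L2 k + mpowi L2 (k - l)) = Q"
  shows "Q ** (mexp ((- t) *\<^sub>R mpowi L2 l) ** Z) = mexp ((- t) *\<^sub>R mpowi L2 l) ** (Q ** Z)"
    and "Q ** (mpowi L2 (- c) ** Y) = - (mpowi L2 (- (c - k)) ** Y + mpowi L2 (- (c - k + l)) ** Y)"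
proof -
  have "Q ** mexp ((- t) *\<^sub>R mpowi L2 l) = mexp ((- t) *\<^sub>R mpowi L2 l) ** Q"
  proof (rule mexp_comm)
    show "Q ** mpowi L2 l = mpowi L2 l ** Q"
      unfolding r[symmetric] by (simp add: rdist mpowi_comm[OF L2])
  qed
  then show "Q ** (mexp ((- t) *\<^sub>R mpowi L2 l) ** Z) = mexp ((- t) *\<^sub>R mpowi L2 l) ** (Q ** Z)"
    by (simp add: matrix_mul_assoc)
  have e: "Q ** mpowi L2 (- c) = - (mpowi L2 (- (c - k)) + mpowi L2 (- (c - k + l)))"
  proof -
    have p1: "mpowi L2 k ** mpowi L2 (- c) = mpowi L2 (- (c - k))" by (rule pw_eq[OF L2, symmetric]) simp
    have p2: "mpowi L2 (k - l) ** mpowi L2 (- c) = mpowi L2 (- (c - k + l))" by (rule pw_eq[OF L2, symmetric]) simp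
    show ?thesis unfolding r[symmetric] rdist p1 p2 by simp
  qed
  show "Q ** (mpowi L2 (- c) ** Y) = - (mpowi L2 (- (c - k)) ** Y + mpowi L2 (- (c - k + l)) ** Y)"
    by (simp only: matrix_mul_assoc e rdist)
qed

lemma Q_TT: assumes L2: "invertible L2" and r: "- (mpowi L2 k + mpowi L2 (k - l)) = Q"
  shows "Q ** TT l L2 L1 X t c b = - (TT l L2 L1 X t (c - k) b + TT l L2 L1 X t (c - k + l) b)"
  unfolding TT_def by (simp only: rassoc Q_rules[OF L2 r] rdist)

lemma Q_UU: assumes L2: "invertible L2" and r: "- (mpowi L2 k + mpowi L2 (k - l)) = Q"
  shows "Q ** UU l L2 B t c = - (UU l L2 B t (c - k) + UU l L2 B t (c - k + l))"
  unfolding UU_def by (simp only: rassoc Q_rules[OF L2 r] rdist)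

theorem mainTheorem1:
  fixes k l :: int
    and P Q :: "complex^'n^'n"
    and RP RQ :: "(complex^'n^'n) set"
    and A :: "complex^'n^'n \<Rightarrow> complex^'n^'m"
    and B :: "complex^'n^'n \<Rightarrow> complex^'m^'n"
    and X :: "complex^'n^'n \<Rightarrow> complex^'n^'n \<Rightarrow> complex^'n^'n"
    and \<omega> :: "complex^'n^'n"
    and g0 :: "complex^'m^'m"
    and \<theta> :: "real \<Rightarrow> int \<Rightarrow> complex^'n^'m"
    and \<eta> :: "real \<Rightarrow> int \<Rightarrow> complex^'m^'n"
    and \<Omega> :: "real \<Rightarrow> int \<Rightarrow> complex^'n^'n"
    and g :: "real \<Rightarrow> int \<Rightarrow> complex^'m^'m"
    and q :: "real \<Rightarrow> int \<Rightarrow> complex^'n^'m"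
    and r :: "real \<Rightarrow> int \<Rightarrow> complex^'m^'n"
    and \<gamma>1 :: "complex^'n^'n"
  assumes k_pos: "k > 0"
    and finP: "finite RP" and finQ: "finite RQ"
    and RP_inv: "\<And>\<Lambda>. \<Lambda> \<in> RP \<Longrightarrow> invertible \<Lambda>"
    and RP_root: "\<And>\<Lambda>. \<Lambda> \<in> RP \<Longrightarrow> - (mpowi \<Lambda> k + mpowi \<Lambda> (k - l)) = P"
    and RQ_inv: "\<And>\<Lambda>'. \<Lambda>' \<in> RQ \<Longrightarrow> invertible \<Lambda>'"
    and RQ_root: "\<And>\<Lambda>'. \<Lambda>' \<in> RQ \<Longrightarrow> - (mpowi \<Lambda>' k + mpowi \<Lambda>' (k - l)) = Q"
    and stein: "\<And>\<Lambda> \<Lambda>'. \<Lambda> \<in> RP \<Longrightarrow> \<Lambda>' \<in> RQ \<Longrightarrow>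
        mpowi \<Lambda>' (- l) ** X \<Lambda>' \<Lambda> ** mpowi \<Lambda> l - X \<Lambda>' \<Lambda> = B \<Lambda>' ** A \<Lambda>"
    and \<gamma>1_def: "\<gamma>1 = \<omega> ** P - Q ** \<omega>"
    and \<theta>_def: "\<And>t j. \<theta> t j = (\<Sum>\<Lambda>\<in>RP. A \<Lambda> ** mexp (t *\<^sub>R mpowi \<Lambda> l) ** mpowi \<Lambda> j)"
    and \<eta>_def: "\<And>t j. \<eta> t j = (\<Sum>\<Lambda>'\<in>RQ. mexp ((- t) *\<^sub>R mpowi \<Lambda>' l) ** mpowi \<Lambda>' (- j) ** B \<Lambda>')"
    and \<Omega>_def: "\<And>t j. \<Omega> t j = (\<Sum>\<Lambda>\<in>RP. \<Sum>\<Lambda>'\<in>RQ.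
        mexp ((- t) *\<^sub>R mpowi \<Lambda>' l) ** mpowi \<Lambda>' (- j) ** X \<Lambda>' \<Lambda>
          ** mexp (t *\<^sub>R mpowi \<Lambda> l) ** mpowi \<Lambda> j) + \<omega>"
    and \<Omega>_inv: "\<And>t j. invertible (\<Omega> t j)"
    and g0_inv: "invertible g0"
    and g_def: "\<And>t j. g t j = (mat 1 - \<theta> t j ** matrix_inv (\<Omega> t (j + l)) ** \<eta> t j) ** g0"
    and q_def: "\<And>t j. q t j = \<theta> t j ** matrix_inv (\<Omega> t (j + l)) ** \<gamma>1"
    and r_def: "\<And>t j. r t j = matrix_inv (\<Omega> t j) ** \<eta> t j"
  shows "\<And>t j. invertible (g t j) \<Longrightarrow> invertible (g t (j + k)) \<Longrightarrow> invertible (g t (j + l)) \<Longrightarrow>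
      (\<exists>D1 D2.
         ((\<lambda>s. g s j ** matrix_inv (g s (j + k))) has_vector_derivative D1) (at t) \<and>
         ((\<lambda>s. q s j ** r s (j + k)) has_vector_derivative D2) (at t) \<and>
         D1 + g t (j + k - l) ** matrix_inv (g t (j + k)) - g t j ** matrix_inv (g t (j + l)) = - D2)
    \<and> ((\<lambda>s. q s j) has_vector_derivative (g t j ** matrix_inv (g t (j + l)) ** q t (j + l))) (at t)
    \<and> ((\<lambda>s. r s j) has_vector_derivative (- (r t (j - l) ** g t (j - l)) ** matrix_inv (g t j))) (at t)"
proof -
  let ?TT = "\<lambda>t c b. (\<Sum>\<Lambda>\<in>RP. \<Sum>\<Lambda>'\<in>RQ. TT l \<Lambda>' \<Lambda> (X \<Lambda>' \<Lambda>) t c b)"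
  have hth: "\<And>t a. \<theta> t a = (\<Sum>\<Lambda>\<in>RP. VV l (A \<Lambda>) \<Lambda> t a)"
    by (simp add: \<theta>_def VV_def)
  have het: "\<And>t a. \<eta> t a = (\<Sum>\<Lambda>'\<in>RQ. UU l \<Lambda>' (B \<Lambda>') t a)"
    by (simp add: \<eta>_def UU_def)
  have hOm: "\<And>t a. \<Omega> t a = ?TT t a a + \<omega>"
    by (simp add: \<Omega>_def TT_def)
  have prod: "\<And>t c b. \<eta> t c ** \<theta> t b = (\<Sum>\<Lambda>\<in>RP. \<Sum>\<Lambda>'\<in>RQ. UU l \<Lambda>' (B \<Lambda>') t c ** VV l (A \<Lambda>) \<Lambda> t b)"
    unfolding hth het matrix_sum_left matrix_sum_right by (simp add: sum.swap[of _ RQ RP])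
  have STshift: "\<And>t c b. ?TT t (c + l) (b + l) = ?TT t c b + \<eta> t c ** \<theta> t b"
    unfolding prod sum.distrib[symmetric]
    by (intro sum.cong refl TT_shift RP_inv RQ_inv stein)
  have STP: "\<And>t c b. ?TT t c b ** P = - (?TT t c (b + k) + ?TT t c (b + k - l))"
    unfolding matrix_sum_left sum.distrib[symmetric] sum_negf[symmetric]
    by (intro sum.cong refl TT_P RP_inv RP_root)
  have QST: "\<And>t c b. Q ** ?TT t c b = - (?TT t (c - k) b + ?TT t (c - k + l) b)"
    unfolding matrix_sum_right sum.distrib[symmetric] sum_negf[symmetric]
    by (intro sum.cong refl Q_TT RQ_inv RQ_root)
  have shift: "\<And>t a. \<Omega> t (a + l) = \<Omega> t a + \<eta> t a ** \<theta> t a"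
    unfolding hOm STshift by (simp add: algebra_simps)
  have dth: "\<And>t a. ((\<lambda>s. \<theta> s a) has_vector_derivative \<theta> t (a + l)) (at t)"
    unfolding hth by (intro has_vector_derivative_sum VV_deriv RP_inv)
  have det: "\<And>t a. ((\<lambda>s. \<eta> s a) has_vector_derivative - \<eta> t (a - l)) (at t)"
    unfolding het sum_negf[symmetric] by (intro has_vector_derivative_sum UU_deriv RQ_inv)
  have dOm: "\<And>t a. ((\<lambda>s. \<Omega> s a) has_vector_derivative \<eta> t (a - l) ** \<theta> t a) (at t)"
  proof -
    fix t a
    have "((\<lambda>s. ?TT s a a + \<omega>) has_vector_derivative
        (\<Sum>\<Lambda>\<in>RP. \<Sum>\<Lambda>'\<in>RQ. TT l \<Lambda>' \<Lambda> (X \<Lambda>' \<Lambda>) t a (a + l) - TT l \<Lambda>' \<Lambda> (X \<Lambda>' \<Lambda>) t (a - l) a) + 0) (at t)"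
      by (intro has_vector_derivative_add has_vector_derivative_sum TT_deriv RP_inv RQ_inv has_vector_derivative_const)
    moreover have "(\<Sum>\<Lambda>\<in>RP. \<Sum>\<Lambda>'\<in>RQ. TT l \<Lambda>' \<Lambda> (X \<Lambda>' \<Lambda>) t a (a + l) - TT l \<Lambda>' \<Lambda> (X \<Lambda>' \<Lambda>) t (a - l) a) + 0
        = \<eta> t (a - l) ** \<theta> t a"
    proof -
      have "?TT t (a - l + l) (a + l) = ?TT t (a - l) a + \<eta> t (a - l) ** \<theta> t a" by (rule STshift)
      then have "?TT t a (a + l) - ?TT t (a - l) a = \<eta> t (a - l) ** \<theta> t a" by simp
      then show ?thesis by (simp add: sum_subtractf)
    qed
    ultimately show "((\<lambda>s. \<Omega> s a) has_vector_derivative \<eta> t (a - l) ** \<theta> t a) (at t)"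
      unfolding hOm by simp
  qed
  have thP: "\<And>t a. \<theta> t a ** P = - (\<theta> t (a + k) + \<theta> t (a + k - l))"
    unfolding hth matrix_sum_left sum.distrib[symmetric] sum_negf[symmetric]
    by (intro sum.cong refl VV_P RP_inv RP_root)
  have Qet: "\<And>t a. Q ** \<eta> t a = - (\<eta> t (a - k) + \<eta> t (a - k + l))"
    unfolding het matrix_sum_right sum.distrib[symmetric] sum_negf[symmetric]
    by (intro sum.cong refl Q_UU RQ_inv RQ_root)
  have gam: "\<And>t a. \<gamma>1 = \<Omega> t (a + l) ** P - Q ** \<Omega> t (a + k) + \<eta> t a ** \<theta> t (a + k)"
  proof -
    fix t a
    have e1: "?TT t (a + l) (a + k + l) = ?TT t a (a + k) + \<eta> t a ** \<theta> t (a + k)" by (rule STshift)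
    have e2: "?TT t (a + l) (a + l) ** P = - (?TT t (a + l) (a + l + k) + ?TT t (a + l) (a + l + k - l))" by (rule STP)
    have e3: "Q ** ?TT t (a + k) (a + k) = - (?TT t (a + k - k) (a + k) + ?TT t (a + k - k + l) (a + k))" by (rule QST)
    have i1: "a + l + k = a + k + l" "a + l + k - l = a + k" "a + k - k = a" "a + k - k + l = a + l" by simp_all
    have "\<Omega> t (a + l) ** P - Q ** \<Omega> t (a + k) + \<eta> t a ** \<theta> t (a + k)
        = ?TT t (a + l) (a + l) ** P + \<omega> ** P - (Q ** ?TT t (a + k) (a + k) + Q ** \<omega>) + \<eta> t a ** \<theta> t (a + k)"
      unfolding hOm by (simp only: matrix_add_rdistrib matrix_add_ldistrib)
    also have "\<dots> = \<omega> ** P - Q ** \<omega>"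
      unfolding e2 e3 i1 e1 by (simp add: algebra_simps)
    finally show "\<gamma>1 = \<Omega> t (a + l) ** P - Q ** \<Omega> t (a + k) + \<eta> t a ** \<theta> t (a + k)"
      using \<gamma>1_def by simp
  qed
  interpret I: abs_sys l k P Q \<gamma>1 g0 \<theta> \<eta> \<Omega>
    by (unfold_locales; (rule \<Omega>_inv g0_inv shift dth det dOm thP Qet gam)?)
  fix t j
  show "(\<exists>D1 D2.
         ((\<lambda>s. g s j ** matrix_inv (g s (j + k))) has_vector_derivative D1) (at t) \<and>
         ((\<lambda>s. q s j ** r s (j + k)) has_vector_derivative D2) (at t) \<and>
         D1 + g t (j + k - l) ** matrix_inv (g t (j + k)) - g t j ** matrix_inv (g t (j + l)) = - D2)
    \<and> ((\<lambda>s. q s j) has_vector_derivative (g t j ** matrix_inv (g t (j + l)) ** q t (j + l))) (at t)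
    \<and> ((\<lambda>s. r s j) has_vector_derivative (- (r t (j - l) ** g t (j - l))) ** matrix_inv (g t j)) (at t)"
    unfolding g_def q_def r_def
    using I.eq1[of j t] I.dq[of j t] I.dr[of j t] unfolding I.G_def by simp
qed

end
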